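(* Fix $p\in(0,1/2]$ and an integer $k\ge 1$. There exists $\theta=\theta(p,k)>0$ such that the following holds for every $n$. If $M$ is a $k\times n$ real matrix whose rows are orthonormal vectors and $x$ is a random vector in $\mathbb{R}^n$ with independent $\operatorname{Ber}(p)$ coordinates, then \[\mathcal{L}(Mx,\theta)\le (1-p)^k.\]
   Context: $\operatorname{Ber}(p)$ takes value $1$ with probability $p$ and $0$ with probability $1-p$. For an $\mathbb{R}^N$-valued random variable $\zeta$ and $r\ge 0$, the Lévy concentration function is $\mathcal{L}(\zeta,r)=\sup_{z\in\mathbb{R}^N}\mathbb{P}[\|\zeta-z\|_2\le r]$. *)

theory Defs
  imports "HOL-Probability.Probability"
begin

text \<open>Vectors in R^N are represented as functions nat => real, only coordinates i < N matter.
  Euclidean distance on the first N coordinates.\<close>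
definition dist_N :: "nat \<Rightarrow> (nat \<Rightarrow> real) \<Rightarrow> (nat \<Rightarrow> real) \<Rightarrow> real" where
  "dist_N N v w = sqrt (\<Sum>i<N. (v i - w i)^2)"

definition levy_conc :: "nat \<Rightarrow> (nat \<Rightarrow> real) pmf \<Rightarrow> real \<Rightarrow> real" where
  "levy_conc N \<zeta> r = (SUP z \<in> {z :: nat \<Rightarrow> real. \<forall>i\<ge>N. z i = 0}.
       measure_pmf.prob \<zeta> {v. dist_N N v z \<le> r})"

text \<open>Random vector with n independent Ber(p) coordinates (True = 1).\<close>
definition ber_vec :: "real \<Rightarrow> nat \<Rightarrow> (nat \<Rightarrow> bool) pmf" where
  "ber_vec p n = Pi_pmf {..<n} False (\<lambda>_. bernoulli_pmf p)"

definition mat_image :: "nat \<Rightarrow> nat \<Rightarrow> (nat \<Rightarrow> nat \<Rightarrow> real) \<Rightarrow> (nat \<Rightarrow> bool) \<Rightarrow> (nat \<Rightarrow> real)" where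
  "mat_image k n M x = (\<lambda>i. if i < k then (\<Sum>j<n. M i j * of_bool (x j)) else 0)"

definition orthonormal_rows :: "nat \<Rightarrow> nat \<Rightarrow> (nat \<Rightarrow> nat \<Rightarrow> real) \<Rightarrow> bool" where
  "orthonormal_rows k n M \<longleftrightarrow>
     (\<forall>i<k. \<forall>i'<k. (\<Sum>j<n. M i j * M i' j) = (if i = i' then 1 else 0))"

end

theory Submission
  imports Defs
begin

lemma cos_upper4: "cos (x::real) \<le> 1 - x^2/2 + x^4/24"
proof -
  obtain t where t: "cos x = (\<Sum>m<4. cos_coeff m * x ^ m) + (cos(t + 1/2 * real 4 * pi) / fact 4) * x ^ 4"
    using Maclaurin_cos_expansion[of x 4] by blast
  have c: "cos (t + 1/2 * real 4 * pi) \<le> 1" by simp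
  have s: "(\<Sum>m<4. cos_coeff m * x ^ m) = 1 - x^2/2"
    by (simp add: lessThan_nat_numeral cos_coeff_def)
  have f: "fact 4 = (24::real)" by (simp add: numeral_eq_Suc)
  have "(cos(t + 1/2 * real 4 * pi) / fact 4) * x ^ 4 \<le> (1/24) * x^4"
    using c f by (intro mult_right_mono) auto
  then show ?thesis using t s by simp
qed

lemma cos_lower2: "1 - x^2/2 \<le> cos (x::real)"
proof -
  obtain t where t: "cos x = (\<Sum>m<2. cos_coeff m * x ^ m) + (cos(t + 1/2 * real 2 * pi) / fact 2) * x ^ 2"
    using Maclaurin_cos_expansion[of x 2] by blast
  have c: "cos (t + 1/2 * real 2 * pi) \<ge> -1" by simp
  have s: "(\<Sum>m<2. cos_coeff m * x ^ m) = 1"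
    by (simp add: lessThan_nat_numeral cos_coeff_def)
  have "(cos(t + 1/2 * real 2 * pi) / fact 2) * x ^ 2 \<ge> (-1/2) * x^2"
    using c by (intro mult_right_mono) auto
  then show ?thesis using t s by simp
qed
lemma finite_set_Pi_bool:
  assumes "finite A"
  shows "finite (set_pmf (Pi_pmf A False (q :: nat \<Rightarrow> bool pmf)))"
proof -
  have "set_pmf (Pi_pmf A False q) \<subseteq> PiE_dflt A False (\<lambda>_. UNIV)"
    using set_Pi_pmf_subset[OF assms, of False q] unfolding PiE_dflt_def by blast
  moreover have "finite (PiE_dflt A False (\<lambda>_. (UNIV :: bool set)))"
    using assms by (intro finite_PiE_dflt) auto
  ultimately show ?thesis by (rule finite_subset)
qed

lemma finite_set_ber: "finite (set_pmf (ber_vec p n))"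
  unfolding ber_vec_def by (rule finite_set_Pi_bool) simp

lemma integrable_ber [simp]:
  fixes h :: "(nat \<Rightarrow> bool) \<Rightarrow> 'b::{banach, second_countable_topology}"
  shows "integrable (measure_pmf (ber_vec p n)) h"
  by (rule integrable_measure_pmf_finite[OF finite_set_ber])

lemma split_exp:
  fixes h :: "(nat \<Rightarrow> bool) \<Rightarrow> 'b::{banach, second_countable_topology}"
  assumes "finite A" "j \<notin> A" "0 \<le> p" "p \<le> 1"
  shows "measure_pmf.expectation (Pi_pmf (insert j A) False (\<lambda>_. bernoulli_pmf p)) h =
     p *\<^sub>R measure_pmf.expectation (Pi_pmf A False (\<lambda>_. bernoulli_pmf p)) (\<lambda>f. h (f(j:=True)))
   + (1-p) *\<^sub>R measure_pmf.expectation (Pi_pmf A False (\<lambda>_. bernoulli_pmf p)) (\<lambda>f. h (f(j:=False)))"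
proof -
  let ?P = "Pi_pmf A False (\<lambda>_. bernoulli_pmf p)"
  have eq: "Pi_pmf (insert j A) False (\<lambda>_. bernoulli_pmf p) =
      bernoulli_pmf p \<bind> (\<lambda>y. map_pmf (\<lambda>f. f(j:=y)) ?P)"
    using assms by (subst Pi_pmf_insert') (simp_all add: map_pmf_def)
  have fin: "finite (set_pmf (map_pmf (\<lambda>f. f(j:=y)) ?P))" for y
    using finite_set_Pi_bool[OF assms(1)] by simp
  have "measure_pmf.expectation (Pi_pmf (insert j A) False (\<lambda>_. bernoulli_pmf p)) h =
     (\<Sum>y\<in>UNIV. pmf (bernoulli_pmf p) y *\<^sub>R measure_pmf.expectation (map_pmf (\<lambda>f. f(j:=y)) ?P) h)"
    unfolding eq by (rule pmf_expectation_bind) (use fin in auto)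
  also have "\<dots> = p *\<^sub>R measure_pmf.expectation ?P (\<lambda>f. h (f(j:=True)))
   + (1-p) *\<^sub>R measure_pmf.expectation ?P (\<lambda>f. h (f(j:=False)))"
    using assms by (simp add: UNIV_bool)
  finally show ?thesis .
qed

lemma prob_as_exp:
  "measure_pmf.prob M E = measure_pmf.expectation M (\<lambda>x. indicator E x :: real)"
  by simp

lemma split_prob:
  assumes "j < n" "0 \<le> p" "p \<le> 1/2"
    and EF: "\<And>x. x \<in> E \<Longrightarrow> x \<in> F"
    and Finv: "\<And>x b. x(j:=b) \<in> F \<longleftrightarrow> x \<in> F"
    and flip: "\<And>x. x \<in> E \<Longrightarrow> x(j := \<not> x j) \<notin> E"
  shows "measure_pmf.prob (ber_vec p n) E \<le> (1-p) * measure_pmf.prob (ber_vec p n) F"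
proof -
  define A where "A = {..<n} - {j}"
  have A: "finite A" "j \<notin> A" "{..<n} = insert j A" using assms(1) by (auto simp: A_def)
  let ?P = "Pi_pmf A False (\<lambda>_. bernoulli_pmf p)"
  have intP: "integrable (measure_pmf ?P) g" for g :: "(nat \<Rightarrow> bool) \<Rightarrow> real"
    by (rule integrable_measure_pmf_finite[OF finite_set_Pi_bool[OF A(1)]])
  define a where "a = measure_pmf.expectation ?P (\<lambda>f. indicator E (f(j:=True)) :: real)"
  define b where "b = measure_pmf.expectation ?P (\<lambda>f. indicator E (f(j:=False)) :: real)"
  define c where "c = measure_pmf.expectation ?P (\<lambda>f. indicator F (f(j:=False)) :: real)"
  have p1: "p \<le> 1" using assms by simp
  have "measure_pmf.expectation (ber_vec p n) (indicator E) = p * a + (1-p) * b"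
    unfolding ber_vec_def A(3) a_def b_def
    using split_exp[OF A(1,2) assms(2) p1, of "indicator E :: _ \<Rightarrow> real"] by (simp only: real_scaleR_def)
  then have PE: "measure_pmf.prob (ber_vec p n) E = p * a + (1-p) * b" by simp
  have indF: "indicator F (f(j:=True)) = (indicator F (f(j:=False)) :: real)" for f
    using Finv[of f True] Finv[of f False] by (simp add: indicator_def)
  have "measure_pmf.expectation (ber_vec p n) (indicator F) = p * c + (1-p) * c"
    unfolding ber_vec_def A(3) c_def
    using split_exp[OF A(1,2) assms(2) p1, of "indicator F :: _ \<Rightarrow> real"] by (simp only: real_scaleR_def indF)
  then have PF: "measure_pmf.prob (ber_vec p n) F = c" by (simp add: algebra_simps)
  have pw: "indicator E (f(j:=True)) + indicator E (f(j:=False)) \<le> (indicator F (f(j:=False)) :: real)" for f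
  proof (cases "f(j:=True) \<in> E")
    case True
    then have "f(j:=False) \<notin> E" using flip[of "f(j:=True)"] by simp
    moreover have "f(j:=False) \<in> F" using EF[OF True] Finv[of f True] Finv[of f False] by simp
    ultimately show ?thesis using True by simp
  next
    case False
    then show ?thesis using EF[of "f(j:=False)"] by (auto simp: indicator_def)
  qed
  have "a + b \<le> c"
  proof -
    have "a + b = measure_pmf.expectation ?P (\<lambda>f. indicator E (f(j:=True)) + indicator E (f(j:=False)) :: real)"
      unfolding a_def b_def by (rule Bochner_Integration.integral_add[symmetric]) (rule intP)+
    also have "\<dots> \<le> c" unfolding c_def by (rule integral_mono[OF intP intP pw])
    finally show ?thesis .
  qed
  have "a \<ge> 0" unfolding a_def by (rule Bochner_Integration.integral_nonneg) simp
  have "p * a + (1-p) * b \<le> (1-p) * a + (1-p) * b"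
    using \<open>a \<ge> 0\<close> assms by (intro add_right_mono mult_right_mono) auto
  also have "\<dots> = (1-p) * (a + b)" by (simp add: algebra_simps)
  also have "\<dots> \<le> (1-p) * c" using \<open>a + b \<le> c\<close> assms
    by (intro mult_left_mono) auto
  finally show ?thesis using PE PF by simp
qed

definition Ssum :: "(nat \<Rightarrow> real) \<Rightarrow> nat \<Rightarrow> (nat \<Rightarrow> bool) \<Rightarrow> real" where
  "Ssum a n x = (\<Sum>j<n. a j * of_bool (x j))"

lemma Ssum_upd: "Ssum a (Suc n) (f(n:=b)) = Ssum a n f + a n * of_bool b"
proof -
  have "(\<Sum>j<n. a j * of_bool ((f(n:=b)) j)) = (\<Sum>j<n. a j * of_bool (f j))"
    by (intro sum.cong) auto
  then show ?thesis by (simp add: Ssum_def)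
qed

lemma charfun_prod:
  assumes "0 \<le> p" "p \<le> 1"
  shows "measure_pmf.expectation (ber_vec p n) (\<lambda>x. cis (s * Ssum a n x)) =
         (\<Prod>j<n. complex_of_real (1-p) + complex_of_real p * cis (s * a j))"
proof (induction n)
  case 0
  then show ?case by (simp add: ber_vec_def Ssum_def)
next
  case (Suc n)
  let ?P = "Pi_pmf {..<n} False (\<lambda>_. bernoulli_pmf p)"
  let ?E = "measure_pmf.expectation ?P (\<lambda>x. cis (s * Ssum a n x))"
  have h: "cis (s * Ssum a (Suc n) (f(n:=b))) = cis (s * Ssum a n f) * cis (s * (a n * of_bool b))" for f b
    by (simp add: Ssum_upd cis_mult distrib_left)
  have "measure_pmf.expectation (ber_vec p (Suc n)) (\<lambda>x. cis (s * Ssum a (Suc n) x)) =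
     p *\<^sub>R measure_pmf.expectation ?P (\<lambda>f. cis (s * Ssum a (Suc n) (f(n:=True))))
   + (1-p) *\<^sub>R measure_pmf.expectation ?P (\<lambda>f. cis (s * Ssum a (Suc n) (f(n:=False))))"
    unfolding ber_vec_def lessThan_Suc by (rule split_exp) (use assms in auto)
  also have "\<dots> = p *\<^sub>R (?E * cis (s * a n)) + (1-p) *\<^sub>R (?E * 1)"
    unfolding h by simp
  also have "\<dots> = ?E * (complex_of_real (1-p) + complex_of_real p * cis (s * a n))"
    by (simp add: scaleR_conv_of_real algebra_simps)
  finally show ?case using Suc.IH by (simp add: ber_vec_def)
qed

lemma cmod_ber_le1:
  assumes "0 \<le> p" "p \<le> 1"
  shows "cmod (complex_of_real (1-p) + complex_of_real p * cis u) \<le> 1"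
proof -
  have "cmod (complex_of_real (1-p) + complex_of_real p * cis u) \<le> cmod (complex_of_real (1-p)) + cmod (complex_of_real p * cis u)"
    by (rule norm_triangle_ineq)
  also have "cmod (complex_of_real (1-p)) = 1 - p" by (simp only: norm_of_real) (use assms in simp)
  also have "cmod (complex_of_real p * cis u) = p" by (simp only: norm_mult norm_of_real norm_cis) (use assms in simp)
  finally show ?thesis by simp
qed

lemma cmod_ber_exp:
  assumes "0 \<le> p" "p \<le> 1/2" "\<bar>u\<bar> \<le> 2"
  shows "cmod (complex_of_real (1-p) + complex_of_real p * cis u) \<le> exp (-(p/6) * u^2)"
proof -
  let ?z = "complex_of_real (1-p) + complex_of_real p * cis u"
  have sq: "(cmod ?z)^2 = 1 - 2*p*(1-p)*(1 - cos u)"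
  proof -
    have "(cmod ?z)^2 = (1 - p + p * cos u)^2 + (p * sin u)^2"
      by (simp add: cmod_power2)
    also have "(p * sin u)^2 = p^2 * (1 - (cos u)^2)"
      by (simp add: power_mult_distrib sin_squared_eq)
    also have "(1 - p + p * cos u)^2 + p^2 * (1 - (cos u)^2) = 1 - 2*p*(1-p)*(1 - cos u)"
      by (simp add: power2_eq_square algebra_simps)
    finally show ?thesis .
  qed
  have u4: "u^4 \<le> 4 * u^2"
  proof -
    have "u^2 \<le> 4" using assms(3) by (metis abs_le_square_iff abs_numeral power2_abs real_sqrt_four real_sqrt_pow2 zero_le_numeral abs_le_iff power2_eq_square) 
    then have "u^2 * u^2 \<le> 4 * u^2" by (intro mult_right_mono) auto
    then show ?thesis by (simp add: power2_eq_square power4_eq_xxxx mult.assoc)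
  qed
  have c: "1 - cos u \<ge> u^2 / 3"
    using cos_upper4[of u] u4 by simp
  have "2*p*(1-p)*(1 - cos u) \<ge> 2*p*(1-p)*(u^2/3)"
    using c assms by (intro mult_left_mono) auto
  moreover have "2*p*(1-p)*(u^2/3) \<ge> p/3 * u^2"
  proof -
    have "2*(1-p) \<ge> 1" using assms by simp
    then have "p * u^2 * (2*(1-p)) \<ge> p * u^2 * 1" using assms by (intro mult_left_mono) auto
    then show ?thesis by (simp add: algebra_simps)
  qed
  ultimately have "(cmod ?z)^2 \<le> 1 + (-(p/3) * u^2)" using sq by simp
  also have "\<dots> \<le> exp (-(p/3) * u^2)" by (rule exp_ge_add_one_self)
  also have "\<dots> = (exp (-(p/6) * u^2))^2"
    by (simp add: exp_double[symmetric] power2_eq_square exp_add[symmetric])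
  finally have "(cmod ?z)^2 \<le> (exp (-(p/6) * u^2))^2" .
  then show ?thesis by (rule power2_le_imp_le) simp
qed

lemma sq_sum_expand:
  fixes g :: "nat \<Rightarrow> real"
  shows "(\<Sum>l<L. g l)^2 = (\<Sum>l<L. \<Sum>l'<L. g l * g l')"
  by (simp add: power2_eq_square sum_product)

lemma ind_bound:
  fixes y \<theta> :: real and L :: nat
  assumes "\<theta> > 0" "L \<ge> 1"
  defines "\<omega> \<equiv> 1 / (real L * \<theta>)"
  shows "(of_bool (\<bar>y\<bar> \<le> \<theta>) :: real) \<le>
     4 / (real L)^2 * (\<Sum>l<L. \<Sum>l'<L. cos ((real l - real l') * \<omega> * y))"
proof -
  have id: "(\<Sum>l<L. \<Sum>l'<L. cos ((real l - real l') * \<omega> * y)) =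
      (\<Sum>l<L. cos (real l * \<omega> * y))^2 + (\<Sum>l<L. sin (real l * \<omega> * y))^2"
  proof -
    have "cos ((real l - real l') * \<omega> * y) = cos (real l * \<omega> * y) * cos (real l' * \<omega> * y)
        + sin (real l * \<omega> * y) * sin (real l' * \<omega> * y)" for l l'
      using cos_diff[of "real l * \<omega> * y" "real l' * \<omega> * y"] by (simp add: algebra_simps)
    then show ?thesis unfolding sq_sum_expand by (simp add: sum.distrib)
  qed
  have nonneg: "0 \<le> (\<Sum>l<L. \<Sum>l'<L. cos ((real l - real l') * \<omega> * y))"
    unfolding id by simp
  show ?thesis
  proof (cases "\<bar>y\<bar> \<le> \<theta>")
    case False
    then show ?thesis using nonneg by simp
  next
    case True
    have "cos (real l * \<omega> * y) \<ge> 1/2" if "l < L" for l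
    proof -
      have "\<bar>real l * \<omega> * y\<bar> = real l * \<bar>y\<bar> / (real L * \<theta>)"
        using assms by (simp add: \<omega>_def abs_mult)
      also have "\<dots> \<le> real L * \<theta> / (real L * \<theta>)"
        using that True assms by (intro divide_right_mono mult_mono) auto
      also have "\<dots> = 1" using assms by simp
      finally have h: "\<bar>real l * \<omega> * y\<bar> \<le> 1" .
      then have "(real l * \<omega> * y)^2 \<le> 1"
        by (metis abs_le_square_iff abs_one power_one)
      then show ?thesis using cos_lower2[of "real l * \<omega> * y"] by simp
    qed
    then have "(\<Sum>l<L. cos (real l * \<omega> * y)) \<ge> (\<Sum>l<L. 1/2)"
      by (intro sum_mono) auto
    then have s: "(\<Sum>l<L. cos (real l * \<omega> * y)) \<ge> real L / 2" by simp
    have "(real L / 2)^2 \<le> (\<Sum>l<L. cos (real l * \<omega> * y))^2"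
      using s assms by (intro power_mono) auto
    then have A: "(real L)^2 / 4 \<le> (\<Sum>l<L. cos (real l * \<omega> * y))^2" by (simp add: power_divide)
    have B: "0 \<le> (\<Sum>l<L. sin (real l * \<omega> * y))^2" by simp
    have "(real L)^2 / 4 \<le> (\<Sum>l<L. \<Sum>l'<L. cos ((real l - real l') * \<omega> * y))"
      unfolding id using A B by linarith
    then have "4 / (real L)^2 * ((real L)^2 / 4) \<le> 4 / (real L)^2 * (\<Sum>l<L. \<Sum>l'<L. cos ((real l - real l') * \<omega> * y))"
      by (intro mult_left_mono) auto
    then show ?thesis using True assms by simp
  qed
qed

lemma exp_cos_le_charfun:
  fixes M :: "'a pmf" and S :: "'a \<Rightarrow> real"
  assumes "finite (set_pmf M)"
  shows "measure_pmf.expectation M (\<lambda>x. cos (c * (S x - t))) \<le>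
         cmod (measure_pmf.expectation M (\<lambda>x. cis (c * S x)))"
proof -
  have int: "integrable M (\<lambda>x. cis (-(c*t)) * cis (c * S x))"
    by (rule integrable_measure_pmf_finite[OF assms])
  have re: "cos (c * (S x - t)) = Re (cis (-(c*t)) * cis (c * S x))" for x
    by (simp add: cis_mult algebra_simps)
  have "measure_pmf.expectation M (\<lambda>x. cos (c * (S x - t))) =
        measure_pmf.expectation M (\<lambda>x. Re (cis (-(c*t)) * cis (c * S x)))"
    unfolding re ..
  also have "\<dots> = Re (measure_pmf.expectation M (\<lambda>x. cis (-(c*t)) * cis (c * S x)))"
    using has_bochner_integral_Re[OF has_bochner_integral_integrable[OF int]]
    by (simp add: has_bochner_integral_iff)
  also have "\<dots> = Re (cis (-(c*t)) * measure_pmf.expectation M (\<lambda>x. cis (c * S x)))"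
    by simp
  also have "\<dots> \<le> cmod (cis (-(c*t)) * measure_pmf.expectation M (\<lambda>x. cis (c * S x)))"
    by (rule complex_Re_le_cmod)
  also have "\<dots> = cmod (measure_pmf.expectation M (\<lambda>x. cis (c * S x)))"
    by (simp add: norm_mult)
  finally show ?thesis .
qed

lemma LO_main:
  assumes p: "0 < p" "p \<le> 1/2" and th: "\<theta> > 0" and L: "L \<ge> 1"
    and a1: "(\<Sum>j<n. (a j)^2) = 1" and ab: "\<forall>j<n. \<bar>a j\<bar> \<le> 2*\<theta>"
  shows "measure_pmf.prob (ber_vec p n) {x. \<bar>Ssum a n x - t\<bar> \<le> \<theta>}
     \<le> 4 / real L + 4 * exp (-(p/6) * (1/(real L * \<theta>))^2)"
proof -
  define \<omega> where "\<omega> = 1/(real L * \<theta>)"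
  define e where "e = exp (-(p/6) * \<omega>^2)"
  let ?B = "ber_vec p n"
  have p1: "0 \<le> p" "p \<le> 1" using p by auto
  have "measure_pmf.prob ?B {x. \<bar>Ssum a n x - t\<bar> \<le> \<theta>} =
      measure_pmf.expectation ?B (\<lambda>x. of_bool (\<bar>Ssum a n x - t\<bar> \<le> \<theta>) :: real)"
    unfolding prob_as_exp by (rule Bochner_Integration.integral_cong) (auto simp: indicator_def)
  also have "\<dots> \<le> measure_pmf.expectation ?B (\<lambda>x. 4/(real L)^2 *
        (\<Sum>l<L. \<Sum>l'<L. cos ((real l - real l') * \<omega> * (Ssum a n x - t))))"
    by (intro integral_mono integrable_ber) (use ind_bound[OF th L] in \<open>simp add: \<omega>_def\<close>)
  also have "\<dots> = 4/(real L)^2 * (\<Sum>l<L. \<Sum>l'<L.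
        measure_pmf.expectation ?B (\<lambda>x. cos ((real l - real l') * \<omega> * (Ssum a n x - t))))"
    by (simp add: Bochner_Integration.integral_sum)
  also have "\<dots> \<le> 4/(real L)^2 * (\<Sum>l<L. \<Sum>l'<L. (of_bool (l = l') + e))"
  proof (intro mult_left_mono sum_mono)
    fix l l' assume l: "l \<in> {..<L}" and l': "l' \<in> {..<L}"
    define c where "c = (real l - real l') * \<omega>"
    have "measure_pmf.expectation ?B (\<lambda>x. cos ((real l - real l') * \<omega> * (Ssum a n x - t)))
        \<le> cmod (measure_pmf.expectation ?B (\<lambda>x. cis (c * Ssum a n x)))"
      unfolding c_def by (rule exp_cos_le_charfun[OF finite_set_ber])
    also have "\<dots> = (\<Prod>j<n. cmod (complex_of_real (1-p) + complex_of_real p * cis (c * a j)))"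
      by (simp add: charfun_prod[OF p1] prod_norm)
    also have "\<dots> \<le> of_bool (l = l') + e"
    proof (cases "l = l'")
      case True
      have "(\<Prod>j<n. cmod (complex_of_real (1-p) + complex_of_real p * cis (c * a j))) \<le> 1"
        by (intro prod_le_1) (use cmod_ber_le1[OF p1] in auto)
      moreover have "e \<ge> 0" by (simp add: e_def)
      ultimately show ?thesis using True by simp
    next
      case False
      have d: "\<bar>real l - real l'\<bar> \<le> real L - 1" using l l' by auto
      have wp: "\<omega> > 0" using th L by (simp add: \<omega>_def)
      have cabs: "\<bar>c\<bar> \<le> (real L - 1) * \<omega>"
        unfolding c_def abs_mult using d wp by (simp add: mult_right_mono)
      have "\<bar>c * a j\<bar> \<le> 2" if "j < n" for j
      proof -
        have "\<bar>c * a j\<bar> \<le> (real L - 1) * \<omega> * (2 * \<theta>)"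
          unfolding abs_mult using cabs ab that th L by (intro mult_mono) (auto simp: \<omega>_def)
        also have "\<dots> = 2 * ((real L - 1) / real L)" using th L by (simp add: \<omega>_def field_simps)
        also have "\<dots> \<le> 2"
        proof -
          have "(real L - 1) / real L \<le> 1" using L by (simp add: divide_le_eq_1)
          then show ?thesis by linarith
        qed
        finally show ?thesis .
      qed
      then have "(\<Prod>j<n. cmod (complex_of_real (1-p) + complex_of_real p * cis (c * a j)))
          \<le> (\<Prod>j<n. exp (-(p/6) * (c * a j)^2))"
        by (intro prod_mono conjI norm_ge_zero cmod_ber_exp) (use p in auto)
      also have "\<dots> = exp (\<Sum>j<n. -(p/6) * (c * a j)^2)"
        by (simp add: exp_sum)
      also have "(\<Sum>j<n. -(p/6) * (c * a j)^2) = -(p/6) * c^2"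
      proof -
        have "(\<Sum>j<n. -(p/6) * (c * a j)^2) = (-(p/6) * c^2) * (\<Sum>j<n. (a j)^2)"
          by (simp add: power_mult_distrib sum_distrib_left mult.assoc)
        then show ?thesis using a1 by simp
      qed
      also have "exp (-(p/6) * c^2) \<le> e"
      proof -
        have "1 \<le> \<bar>real l - real l'\<bar>" using False by linarith
        then have "1 \<le> (real l - real l')^2" by (metis abs_le_square_iff abs_one power_one)
        then have "\<omega>^2 * 1 \<le> \<omega>^2 * (real l - real l')^2" by (intro mult_left_mono) auto
        then have "\<omega>^2 \<le> c^2" by (simp add: c_def power_mult_distrib mult.commute)
        then show ?thesis unfolding e_def using p by simp
      qed
      finally show ?thesis by simp
    qed
    finally show "measure_pmf.expectation ?B (\<lambda>x. cos ((real l - real l') * \<omega> * (Ssum a n x - t)))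
        \<le> of_bool (l = l') + e" .
  qed simp
  also have "(\<Sum>l<L. \<Sum>l'<L. (of_bool (l = l') + e)) = real L + real L * real L * e"
    by (simp add: sum.distrib of_bool_def algebra_simps)
  also have "4/(real L)^2 * (real L + real L * real L * e) = 4 / real L + 4 * e"
    using L by (simp add: field_simps power2_eq_square)
  finally show ?thesis by (simp add: e_def \<omega>_def)
qed

lemma LO_final:
  assumes p: "0 < p" "p \<le> 1/2" and eps: "\<epsilon> > 0"
  shows "\<exists>\<theta>>0. \<forall>n a t. (\<Sum>j<n. (a j)^2) = 1 \<longrightarrow> (\<forall>j<n. \<bar>a j\<bar> \<le> 2*\<theta>) \<longrightarrow>
      measure_pmf.prob (ber_vec p n) {x. \<bar>Ssum a n x - t\<bar> \<le> \<theta>} \<le> \<epsilon>"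
proof -
  define L where "L = nat \<lceil>8/\<epsilon>\<rceil> + 1"
  have L1: "L \<ge> 1" by (simp add: L_def)
  have Lge: "real L \<ge> 8/\<epsilon>" unfolding L_def by linarith
  define \<theta> where "\<theta> = sqrt (\<epsilon> * p / 48) / real L"
  have th: "\<theta> > 0" using p eps L1 by (simp add: \<theta>_def)
  have b1: "4 / real L \<le> \<epsilon>/2"
  proof -
    have Lp: "real L > 0" using L1 by simp
    have "0 < real L * 8 / \<epsilon>" using Lp eps by simp
    then have "4 / real L \<le> 4 / (8/\<epsilon>)" using Lge eps by (intro divide_left_mono) auto
    then show ?thesis using eps by simp
  qed
  have w: "(1/(real L * \<theta>))^2 = 48 / (\<epsilon> * p)"
    using p eps L1 by (simp add: \<theta>_def power_divide power_mult_distrib)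
  have b2: "4 * exp (-(p/6) * (1/(real L * \<theta>))^2) \<le> \<epsilon>/2"
  proof -
    have "-(p/6) * (1/(real L * \<theta>))^2 = - (8/\<epsilon>)" by (subst w) (use p eps in \<open>simp add: field_simps\<close>)
    moreover have "exp (-(8/\<epsilon>)) \<le> \<epsilon>/8"
    proof -
      have "1 + 8/\<epsilon> \<le> exp (8/\<epsilon>)" by (rule exp_ge_add_one_self)
      then have "8/\<epsilon> \<le> exp (8/\<epsilon>)" by linarith
      then have "inverse (exp (8/\<epsilon>)) \<le> inverse (8/\<epsilon>)"
        using eps by (intro le_imp_inverse_le) auto
      then show ?thesis by (simp add: exp_minus)
    qed
    ultimately show ?thesis by simp
  qed
  show ?thesis
  proof (intro exI[of _ \<theta>] conjI allI impI th)
    fix n :: nat and a :: "nat \<Rightarrow> real" and t :: real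
    assume as1: "(\<Sum>j<n. (a j)^2) = 1" and as2: "\<forall>j<n. \<bar>a j\<bar> \<le> 2*\<theta>"
    have "measure_pmf.prob (ber_vec p n) {x. \<bar>Ssum a n x - t\<bar> \<le> \<theta>}
     \<le> 4 / real L + 4 * exp (-(p/6) * (1/(real L * \<theta>))^2)"
      by (rule LO_main[OF p th L1]) (use as1 as2 in auto)
    with b1 b2 show "measure_pmf.prob (ber_vec p n) {x. \<bar>Ssum a n x - t\<bar> \<le> \<theta>} \<le> \<epsilon>" by simp
  qed
qed

lemma sum_delta_ob:
  fixes f :: "nat \<Rightarrow> real"
  assumes "i < R"
  shows "(\<Sum>m<R. of_bool (i = m) * f m) = f i"
proof -
  have "(\<Sum>m<R. of_bool (i = m) * f m) = (\<Sum>m<R. if m = i then f m else 0)"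
    by (intro sum.cong) auto
  also have "\<dots> = f i" using assms by (simp add: sum.delta)
  finally show ?thesis .
qed

lemma sum_delta_ob2:
  fixes f :: "nat \<Rightarrow> real"
  assumes "i < R"
  shows "(\<Sum>m<R. of_bool (m = i) * f m) = f i"
proof -
  have "(\<Sum>m<R. of_bool (m = i) * f m) = (\<Sum>m<R. of_bool (i = m) * f m)"
    by (intro sum.cong) auto
  then show ?thesis using sum_delta_ob[OF assms] by simp
qed

lemma sum_delta_ob':
  fixes f :: "nat \<Rightarrow> real"
  assumes "i < R"
  shows "(\<Sum>m<R. f m * of_bool (i = m)) = f i"
  using sum_delta_ob[OF assms, of f] by (simp add: mult.commute)

lemma bilin:
  fixes a b :: "nat \<Rightarrow> real" and X :: "nat \<Rightarrow> nat \<Rightarrow> real"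
  assumes "finite A" "finite L"
  shows "(\<Sum>l\<in>L. (\<Sum>m\<in>A. a m * X m l) * (\<Sum>m'\<in>A. b m' * X m' l)) =
         (\<Sum>m\<in>A. \<Sum>m'\<in>A. a m * b m' * (\<Sum>l\<in>L. X m l * X m' l))"
proof -
  have "(\<Sum>l\<in>L. (\<Sum>m\<in>A. a m * X m l) * (\<Sum>m'\<in>A. b m' * X m' l)) =
        (\<Sum>l\<in>L. \<Sum>m\<in>A. \<Sum>m'\<in>A. a m * b m' * (X m l * X m' l))"
    by (simp add: sum_product algebra_simps)
  also have "\<dots> = (\<Sum>m\<in>A. \<Sum>l\<in>L. \<Sum>m'\<in>A. a m * b m' * (X m l * X m' l))"
    by (rule sum.swap)
  also have "\<dots> = (\<Sum>m\<in>A. \<Sum>m'\<in>A. \<Sum>l\<in>L. a m * b m' * (X m l * X m' l))"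
    by (rule sum.cong[OF refl]) (rule sum.swap)
  also have "\<dots> = (\<Sum>m\<in>A. \<Sum>m'\<in>A. a m * b m' * (\<Sum>l\<in>L. X m l * X m' l))"
    by (simp add: sum_distrib_left)
  finally show ?thesis .
qed

lemma ob_sym: "(of_bool (a = b) :: real) = of_bool (b = a)" by auto

lemma refl_orth:
  fixes w :: "nat \<Rightarrow> real" and D :: real
  assumes D: "D \<noteq> 0" and ww: "(\<Sum>m<R. (w m)^2) = 2 * D" and i: "i < R" and i': "i' < R"
  shows "(\<Sum>m<R. (of_bool (i = m) - w i * w m / D) * (of_bool (i' = m) - w i' * w m / D)) = of_bool (i = i')"
proof -
  have e: "(of_bool (i = m) - w i * w m / D) * (of_bool (i' = m) - w i' * w m / D) =
     of_bool (i = m) * of_bool (i' = m) - (w i' / D) * (of_bool (i = m) * w m)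
     - (w i / D) * (of_bool (i' = m) * w m) + (w i * w i' / D^2) * (w m)^2" for m
    by (simp add: algebra_simps power2_eq_square)
  have "(\<Sum>m<R. (of_bool (i = m) - w i * w m / D) * (of_bool (i' = m) - w i' * w m / D)) =
     (\<Sum>m<R. of_bool (i = m) * of_bool (i' = m)) - (\<Sum>m<R. (w i' / D) * (of_bool (i = m) * w m))
     - (\<Sum>m<R. (w i / D) * (of_bool (i' = m) * w m)) + (\<Sum>m<R. (w i * w i' / D^2) * (w m)^2)"
    unfolding e by (simp only: sum.distrib sum_subtractf)
  also have "\<dots> = of_bool (i' = i) - (w i' / D) * w i - (w i / D) * w i' + (w i * w i' / D^2) * (2 * D)"
    by (simp only: sum_distrib_left[symmetric] sum_delta_ob[OF i] sum_delta_ob[OF i'] ww)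
  also have "\<dots> = of_bool (i = i')" using D by (simp add: field_simps power2_eq_square ob_sym[of i'])
  finally show ?thesis .
qed

lemma householder:
  fixes u :: "nat \<Rightarrow> real"
  assumes r: "r < R" and u1: "(\<Sum>i<R. (u i)^2) = 1"
  shows "\<exists>Q. (\<forall>i<R. \<forall>i'<R. (\<Sum>m<R. Q i m * Q i' m) = of_bool (i = i')) \<and>
             (\<forall>m<R. \<forall>m'<R. (\<Sum>i<R. Q i m * Q i m') = of_bool (m = m')) \<and>
             (\<forall>i<R. (\<Sum>m<R. Q i m * u m) = of_bool (i = r))"
proof (cases "u r = 1")
  case True
  have z: "u i = 0" if "i < R" "i \<noteq> r" for i
  proof -
    have "(\<Sum>i<R. (u i)^2) = (u r)^2 + (\<Sum>i\<in>{..<R}-{r}. (u i)^2)"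
      using r by (simp add: sum.remove)
    then have "(\<Sum>i\<in>{..<R}-{r}. (u i)^2) = 0" using u1 True by simp
    then have "\<forall>i\<in>{..<R}-{r}. (u i)^2 = 0"
      by (subst (asm) sum_nonneg_eq_0_iff) auto
    then show ?thesis using that by auto
  qed
  show ?thesis
  proof (intro exI[of _ "\<lambda>i m. of_bool (i = m)"] conjI allI impI)
    fix i i' assume "i < R" "i' < R"
    then show "(\<Sum>m<R. of_bool (i = m) * of_bool (i' = m)) = (of_bool (i = i') :: real)"
      by (simp add: sum_delta_ob)
  next
    fix m m' assume "m < R" "m' < R"
    then show "(\<Sum>i<R. of_bool (i = m) * of_bool (i = m')) = (of_bool (m = m') :: real)"
      using sum_delta_ob2[of m R "\<lambda>i. of_bool (i = m')"] by simp
  next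
    fix i assume "i < R"
    then show "(\<Sum>m<R. of_bool (i = m) * u m) = of_bool (i = r)"
      using True z by (simp add: sum_delta_ob)
  qed
next
  case False
  have "(u r)^2 \<le> (\<Sum>i<R. (u i)^2)"
    using r by (intro member_le_sum) auto
  then have "(u r)^2 \<le> 1" using u1 by simp
  then have "u r \<le> 1" by (metis abs_le_square_iff abs_one abs_ge_self order_trans power_one)
  define D where "D = 1 - u r"
  have Dp: "D > 0" using False \<open>u r \<le> 1\<close> by (simp add: D_def)
  define w where "w i = u i - of_bool (r = i)" for i
  have wu: "(\<Sum>m<R. w m * u m) = D"
  proof -
    have "(\<Sum>m<R. w m * u m) = (\<Sum>m<R. (u m)^2 - of_bool (r = m) * u m)"
      by (intro sum.cong) (simp_all add: w_def algebra_simps power2_eq_square)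
    also have "\<dots> = (\<Sum>m<R. (u m)^2) - (\<Sum>m<R. of_bool (r = m) * u m)"
      by (simp only: sum_subtractf)
    also have "\<dots> = 1 - u r" by (simp only: sum_delta_ob[OF r] u1)
    finally show ?thesis by (simp add: D_def)
  qed
  have ww: "(\<Sum>m<R. (w m)^2) = 2 * D"
  proof -
    have e: "(w m)^2 = (u m)^2 - 2 * (of_bool (r = m) * u m) + of_bool (r = m) * 1" for m
      by (cases "r = m") (simp_all add: w_def power2_eq_square algebra_simps)
    have "(\<Sum>m<R. (w m)^2) = (\<Sum>m<R. (u m)^2) - (\<Sum>m<R. 2 * (of_bool (r = m) * u m)) + (\<Sum>m<R. of_bool (r = m) * 1)"
      unfolding e by (simp only: sum.distrib sum_subtractf)
    also have "\<dots> = 1 - 2 * u r + 1"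
      by (simp only: sum_distrib_left[symmetric] sum_delta_ob[OF r] u1)
    finally show ?thesis by (simp add: D_def)
  qed
  define Q where "Q i m = of_bool (i = m) - w i * w m / D" for i m
  have ob: "of_bool (i = m) = (of_bool (m = i) :: real)" for i m :: nat by auto
  have sym: "Q i m = Q m i" for i m unfolding Q_def by (subst ob) (simp add: mult.commute)
  have H1: "\<forall>i<R. \<forall>i'<R. (\<Sum>m<R. Q i m * Q i' m) = of_bool (i = i')"
    unfolding Q_def using refl_orth[OF _ ww] Dp by auto
  show ?thesis
  proof (intro exI[of _ Q] conjI H1 allI impI)
    fix m m' assume "m < R" "m' < R"
    then show "(\<Sum>i<R. Q i m * Q i m') = of_bool (m = m')"
      using H1 by (simp add: sym[of _ m] sym[of _ m'])
  next
    fix i assume i: "i < R"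
    have "(\<Sum>m<R. Q i m * u m) = (\<Sum>m<R. of_bool (i = m) * u m - (w i / D) * (w m * u m))"
      by (intro sum.cong) (simp_all add: Q_def algebra_simps)
    also have "\<dots> = (\<Sum>m<R. of_bool (i = m) * u m) - (w i / D) * (\<Sum>m<R. w m * u m)"
      by (simp only: sum_subtractf sum_distrib_left)
    also have "\<dots> = u i - w i" using Dp by (simp only: sum_delta_ob[OF i] wu) simp
    also have "\<dots> = of_bool (i = r)" by (simp add: w_def ob)
    finally show "(\<Sum>m<R. Q i m * u m) = of_bool (i = r)" .
  qed
qed

lemma dist_N_L2: "dist_N R v w = L2_set (\<lambda>i. v i - w i) {..<R}"
  by (simp add: dist_N_def L2_set_def)

lemma dist_N_tri: "dist_N R v w \<le> dist_N R v z + dist_N R w z"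
proof -
  have "dist_N R v w = L2_set (\<lambda>i. (v i - z i) + (z i - w i)) {..<R}"
    by (simp add: dist_N_L2)
  also have "\<dots> \<le> L2_set (\<lambda>i. v i - z i) {..<R} + L2_set (\<lambda>i. z i - w i) {..<R}"
    by (rule L2_set_triangle_ineq)
  also have "L2_set (\<lambda>i. z i - w i) {..<R} = dist_N R w z"
    by (simp add: dist_N_def L2_set_def power2_commute)
  finally show ?thesis by (simp add: dist_N_L2)
qed

lemma dist_N_coord:
  assumes "i < R"
  shows "\<bar>v i - w i\<bar> \<le> dist_N R v w"
proof -
  have "(v i - w i)^2 \<le> (\<Sum>i<R. (v i - w i)^2)"
    using assms by (intro member_le_sum) auto
  then have "sqrt ((v i - w i)^2) \<le> dist_N R v w"
    unfolding dist_N_def by (rule real_sqrt_le_mono)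
  then show ?thesis by simp
qed

lemma main_ind:
  assumes p: "0 < p" "p \<le> 1/2" and th: "\<theta> > 0"
    and LO: "\<forall>n a t. (\<Sum>j<n. (a j)^2) = 1 \<longrightarrow> (\<forall>j<n. \<bar>a j\<bar> \<le> 2*\<theta>) \<longrightarrow>
      measure_pmf.prob (ber_vec p n) {x. \<bar>Ssum a n x - t\<bar> \<le> \<theta>} \<le> (1-p)^k"
  shows "r \<le> k \<Longrightarrow> orthonormal_rows r n N \<Longrightarrow>
    measure_pmf.prob (ber_vec p n) {x. dist_N r (mat_image r n N x) z \<le> \<theta>} \<le> (1-p)^r"
proof (induction r arbitrary: N z)
  case 0
  then show ?case by simp
next
  case (Suc r)
  let ?E = "{x. dist_N (Suc r) (mat_image (Suc r) n N x) z \<le> \<theta>}"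
  have orth: "\<And>i i'. i < Suc r \<Longrightarrow> i' < Suc r \<Longrightarrow> (\<Sum>j<n. N i j * N i' j) = (if i = i' then 1 else 0)"
    using Suc.prems(2) unfolding orthonormal_rows_def by blast
  have p12: "0 \<le> p" "p \<le> 1/2" using p by auto
  show ?case
  proof (cases "\<exists>j<n. (\<Sum>i<Suc r. (N i j)^2) > 4*\<theta>^2")
    case False
    have a1: "(\<Sum>j<n. (N 0 j)^2) = 1" using orth[of 0 0] by (simp add: power2_eq_square)
    have ab: "\<forall>j<n. \<bar>N 0 j\<bar> \<le> 2*\<theta>"
    proof (intro allI impI)
      fix j assume j: "j < n"
      have "(N 0 j)^2 \<le> (\<Sum>i<Suc r. (N i j)^2)" by (intro member_le_sum) auto
      also have "\<dots> \<le> 4*\<theta>^2" using False j by auto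
      also have "\<dots> = (2*\<theta>)^2" by (simp add: power2_eq_square)
      finally have "\<bar>N 0 j\<bar> \<le> \<bar>2*\<theta>\<bar>" by (simp only: abs_le_square_iff)
      then show "\<bar>N 0 j\<bar> \<le> 2*\<theta>" using th by simp
    qed
    have sub: "?E \<subseteq> {x. \<bar>Ssum (N 0) n x - z 0\<bar> \<le> \<theta>}"
    proof
      fix x assume "x \<in> ?E"
      then have "\<bar>mat_image (Suc r) n N x 0 - z 0\<bar> \<le> \<theta>"
        using dist_N_coord[of 0 "Suc r" "mat_image (Suc r) n N x" z] by simp
      then show "x \<in> {x. \<bar>Ssum (N 0) n x - z 0\<bar> \<le> \<theta>}"
        by (simp add: mat_image_def Ssum_def)
    qed
    have "measure_pmf.prob (ber_vec p n) ?E \<le> measure_pmf.prob (ber_vec p n) {x. \<bar>Ssum (N 0) n x - z 0\<bar> \<le> \<theta>}"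
      by (rule measure_pmf.finite_measure_mono[OF sub]) simp
    also have "\<dots> \<le> (1-p)^k" using LO a1 ab by blast
    also have "\<dots> \<le> (1-p)^(Suc r)" using Suc.prems(1) p by (intro power_decreasing) auto
    finally show ?thesis .
  next
    case True
    then obtain j where j: "j < n" "(\<Sum>i<Suc r. (N i j)^2) > 4*\<theta>^2" by blast
    define c where "c = sqrt (\<Sum>i<Suc r. (N i j)^2)"
    have c2: "c > 2*\<theta>"
    proof -
      have "sqrt ((2*\<theta>)^2) < c" unfolding c_def using j(2)
        by (intro real_sqrt_less_mono) (simp add: power2_eq_square)
      moreover have "sqrt ((2*\<theta>)^2) = 2*\<theta>" using th by (subst real_sqrt_abs) simp
      ultimately show ?thesis by linarith
    qed
    have cpos: "c > 0" using c2 th by simp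
    have csq: "c^2 = (\<Sum>i<Suc r. (N i j)^2)" unfolding c_def
      by (rule real_sqrt_pow2) (simp add: sum_nonneg)
    define u where "u i = N i j / c" for i
    have u1: "(\<Sum>i<Suc r. (u i)^2) = 1"
    proof -
      have "(\<Sum>i<Suc r. (u i)^2) = (\<Sum>i<Suc r. (N i j)^2) / c^2"
        unfolding u_def power_divide by (rule sum_divide_distrib[symmetric])
      then show ?thesis by (simp only: csq[symmetric]) (use cpos in simp)
    qed
    have Nu: "N i j = c * u i" for i using cpos by (simp add: u_def)
    obtain Q where Q1: "\<forall>i<Suc r. \<forall>i'<Suc r. (\<Sum>m<Suc r. Q i m * Q i' m) = of_bool (i = i')"
      and Q2: "\<forall>m<Suc r. \<forall>m'<Suc r. (\<Sum>i<Suc r. Q i m * Q i m') = of_bool (m = m')"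
      and Q3: "\<forall>i<Suc r. (\<Sum>m<Suc r. Q i m * u m) = of_bool (i = r)"
      using householder[of r "Suc r" u] u1 by auto
    define N' where "N' i l = (\<Sum>m<Suc r. Q i m * N m l)" for i l
    define z' where "z' i = (\<Sum>m<Suc r. Q i m * z m)" for i
    have orth': "orthonormal_rows r n N'"
      unfolding orthonormal_rows_def
    proof (intro allI impI)
      fix i i' assume i: "i < r" and i': "i' < r"
      have "(\<Sum>l<n. N' i l * N' i' l) =
          (\<Sum>m<Suc r. \<Sum>m'<Suc r. Q i m * Q i' m' * (\<Sum>l<n. N m l * N m' l))"
        unfolding N'_def by (rule bilin) auto
      also have "\<dots> = (\<Sum>m<Suc r. \<Sum>m'<Suc r. Q i m * (Q i' m' * of_bool (m = m')))"
        by (intro sum.cong refl) (simp add: orth)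
      also have "\<dots> = (\<Sum>m<Suc r. Q i m * Q i' m)"
        by (intro sum.cong refl) (simp add: sum_distrib_left[symmetric] sum_delta_ob')
      also have "\<dots> = of_bool (i = i')" using Q1 i i' by simp
      finally show "(\<Sum>l<n. N' i l * N' i' l) = (if i = i' then 1 else 0)" by simp
    qed
    have N'j: "N' i j = 0" if "i < r" for i
    proof -
      have "N' i j = c * (\<Sum>m<Suc r. Q i m * u m)"
        unfolding N'_def Nu by (simp add: sum_distrib_left algebra_simps)
      then show ?thesis using Q3 that by simp
    qed
    have img: "mat_image r n N' x i = (\<Sum>m<Suc r. Q i m * mat_image (Suc r) n N x m)" if "i < r" for x i
    proof -
      have "mat_image r n N' x i = (\<Sum>l<n. N' i l * of_bool (x l))"
        using that by (simp add: mat_image_def)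
      also have "\<dots> = (\<Sum>l<n. \<Sum>m<Suc r. Q i m * (N m l * of_bool (x l)))"
        by (intro sum.cong refl) (simp only: N'_def sum_distrib_right mult.assoc)
      also have "\<dots> = (\<Sum>m<Suc r. \<Sum>l<n. Q i m * (N m l * of_bool (x l)))"
        by (rule sum.swap)
      also have "\<dots> = (\<Sum>m<Suc r. Q i m * mat_image (Suc r) n N x m)"
      proof (rule sum.cong[OF refl])
        fix m assume "m \<in> {..<Suc r}"
        then have m: "m < Suc r" by simp
        show "(\<Sum>l<n. Q i m * (N m l * of_bool (x l))) = Q i m * mat_image (Suc r) n N x m"
          by (simp only: mat_image_def if_P[OF m] sum_distrib_left)
      qed
      finally show ?thesis .
    qed
    have distle: "dist_N r (mat_image r n N' x) z' \<le> dist_N (Suc r) (mat_image (Suc r) n N x) z" for x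
    proof -
      define w where "w m = mat_image (Suc r) n N x m - z m" for m
      have d: "mat_image r n N' x i - z' i = (\<Sum>m<Suc r. Q i m * w m)" if "i < r" for i
        using that by (simp add: img z'_def w_def algebra_simps sum_subtractf)
      have "(\<Sum>i<r. (mat_image r n N' x i - z' i)^2) = (\<Sum>i<r. (\<Sum>m<Suc r. Q i m * w m)^2)"
        by (intro sum.cong) (simp_all add: d)
      also have "\<dots> \<le> (\<Sum>i<Suc r. (\<Sum>m<Suc r. Q i m * w m)^2)"
        by (intro sum_mono2) auto
      also have "\<dots> = (\<Sum>i<Suc r. (\<Sum>m<Suc r. w m * Q i m) * (\<Sum>m'<Suc r. w m' * Q i m'))"
        by (simp add: power2_eq_square mult.commute)
      also have "\<dots> = (\<Sum>m<Suc r. \<Sum>m'<Suc r. w m * w m' * (\<Sum>i<Suc r. Q i m * Q i m'))"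
        by (rule bilin[where X = "\<lambda>m i. Q i m"]) auto
      also have "\<dots> = (\<Sum>m<Suc r. \<Sum>m'<Suc r. w m * (w m' * of_bool (m = m')))"
        by (intro sum.cong refl) (auto simp: Q2 simp del: sum.lessThan_Suc)
      also have "\<dots> = (\<Sum>m<Suc r. (w m)^2)"
        by (intro sum.cong refl) (simp add: sum_distrib_left[symmetric] sum_delta_ob' power2_eq_square)
      finally have "(\<Sum>i<r. (mat_image r n N' x i - z' i)^2) \<le> (\<Sum>m<Suc r. (w m)^2)" .
      then show ?thesis unfolding dist_N_def w_def by (rule real_sqrt_le_mono)
    qed
    let ?F = "{x. dist_N r (mat_image r n N' x) z' \<le> \<theta>}"
    have EF: "x \<in> ?F" if "x \<in> ?E" for x using that distle[of x] by simp
    have Finv: "x(j:=b) \<in> ?F \<longleftrightarrow> x \<in> ?F" for x b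
    proof -
      have "mat_image r n N' (x(j:=b)) = mat_image r n N' x"
      proof
        fix i show "mat_image r n N' (x(j:=b)) i = mat_image r n N' x i"
        proof (cases "i < r")
          case True
          have "(\<Sum>l<n. N' i l * of_bool ((x(j:=b)) l)) = (\<Sum>l<n. N' i l * of_bool (x l))"
            by (intro sum.cong) (auto simp: N'j[OF True])
          then show ?thesis by (simp add: mat_image_def)
        qed (simp add: mat_image_def)
      qed
      then show ?thesis by simp
    qed
    have flip: "x(j := \<not> x j) \<notin> ?E" if "x \<in> ?E" for x
    proof
      assume x': "x(j := \<not> x j) \<in> ?E"
      let ?x' = "x(j := \<not> x j)"
      have diff: "mat_image (Suc r) n N x i - mat_image (Suc r) n N ?x' i = N i j * (of_bool (x j) - of_bool (\<not> x j))"
        if "i < Suc r" for i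
      proof -
        have "mat_image (Suc r) n N x i - mat_image (Suc r) n N ?x' i =
            (\<Sum>l<n. N i l * (of_bool (x l) - of_bool (?x' l)))"
          using that by (simp add: mat_image_def sum_subtractf algebra_simps)
        also have "\<dots> = (\<Sum>l<n. if l = j then N i j * (of_bool (x j) - of_bool (\<not> x j)) else 0)"
          by (intro sum.cong) auto
        also have "\<dots> = N i j * (of_bool (x j) - of_bool (\<not> x j))"
          using j(1) by (simp add: sum.delta)
        finally show ?thesis .
      qed
      have "dist_N (Suc r) (mat_image (Suc r) n N x) (mat_image (Suc r) n N ?x') = c"
      proof -
        have "(\<Sum>i<Suc r. (mat_image (Suc r) n N x i - mat_image (Suc r) n N ?x' i)^2) = (\<Sum>i<Suc r. (N i j)^2)"
          by (intro sum.cong) (auto simp: diff power_mult_distrib)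
        then show ?thesis by (simp add: dist_N_def c_def)
      qed
      moreover have "dist_N (Suc r) (mat_image (Suc r) n N x) (mat_image (Suc r) n N ?x') \<le> 2 * \<theta>"
        using dist_N_tri[of "Suc r" "mat_image (Suc r) n N x" "mat_image (Suc r) n N ?x'" z] that x' by simp
      ultimately show False using c2 by simp
    qed
    have "measure_pmf.prob (ber_vec p n) ?E \<le> (1-p) * measure_pmf.prob (ber_vec p n) ?F"
      by (rule split_prob[OF j(1) p12]) (use EF Finv flip in auto)
    also have "measure_pmf.prob (ber_vec p n) ?F \<le> (1-p)^r"
      using Suc.IH[OF _ orth'] Suc.prems(1) by simp
    then have "(1-p) * measure_pmf.prob (ber_vec p n) ?F \<le> (1-p) * (1-p)^r"
      using p by (intro mult_left_mono) auto
    finally show ?thesis by simp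
  qed
qed

theorem lemma2p5:
  fixes p :: real and k :: nat
  assumes "0 < p" and "p \<le> 1/2" and "k \<ge> 1"
  shows "\<exists>\<theta>>0. \<forall>n::nat. \<forall>M :: nat \<Rightarrow> nat \<Rightarrow> real.
           orthonormal_rows k n M \<longrightarrow>
           levy_conc k (map_pmf (mat_image k n M) (ber_vec p n)) \<theta> \<le> (1 - p) ^ k"
proof -
  have "(1-p)^k > 0" using assms by simp
  then obtain \<theta> where th: "\<theta> > 0" and LO: "\<forall>n a t. (\<Sum>j<n. (a j)^2) = 1 \<longrightarrow> (\<forall>j<n. \<bar>a j\<bar> \<le> 2*\<theta>) \<longrightarrow>
      measure_pmf.prob (ber_vec p n) {x. \<bar>Ssum a n x - t\<bar> \<le> \<theta>} \<le> (1-p)^k"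
    using LO_final[OF assms(1,2)] by blast
  show ?thesis
  proof (intro exI[of _ \<theta>] conjI th allI impI)
    fix n :: nat and M :: "nat \<Rightarrow> nat \<Rightarrow> real"
    assume orth: "orthonormal_rows k n M"
    show "levy_conc k (map_pmf (mat_image k n M) (ber_vec p n)) \<theta> \<le> (1 - p) ^ k"
      unfolding levy_conc_def
    proof (rule cSUP_least)
      show "{z :: nat \<Rightarrow> real. \<forall>i\<ge>k. z i = 0} \<noteq> {}" by (auto intro: exI[of _ "\<lambda>_. 0"])
    next
      fix z :: "nat \<Rightarrow> real"
      have "measure_pmf.prob (ber_vec p n) {x. dist_N k (mat_image k n M x) z \<le> \<theta>} \<le> (1-p)^k"
        by (rule main_ind[OF assms(1,2) th LO _ orth]) simp
      then show "measure_pmf.prob (map_pmf (mat_image k n M) (ber_vec p n)) {v. dist_N k v z \<le> \<theta>} \<le> (1-p)^k"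
        by (simp add: vimage_def)
    qed
  qed
qed
end
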